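(* Let $(\omega_n)_{n}$ be i.i.d. random variables whose common law has support $[0,1]$, and for $E\in\mathbb{R}$ let $$T_n=\begin{pmatrix}(\omega_n-E)(\omega_n+E)+1&\omega_n-E\\\omega_n+E&1\end{pmatrix}\in SL_2(\mathbb{R}).$$ Let $G$ be the closed subgroup of $SL_2(\mathbb{R})$ generated by the support of the common law of the $T_n$. If $E\in[-3,3]$, then $G$ is not compact and, for every direction $\tilde{x}$ in the projective line $\mathbb{P}(\mathbb{R}^2)$, the orbit $\{g\tilde{x}:g\in G\}$ has at least three elements. *)

theory Defs
  imports "HOL-Probability.Probability"
begin

definition measure_support :: "'a::topological_space measure \<Rightarrow> 'a set" where
  "measure_support M = {x. \<forall>U. open U \<longrightarrow> x \<in> U \<longrightarrow> emeasure M U > 0}"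

definition SL2 :: "(real^2^2) set" where
  "SL2 = {A. det A = 1}"

definition closed_subgroup_generated :: "(real^2^2) set \<Rightarrow> (real^2^2) set" where
  "closed_subgroup_generated S =
     \<Inter>{H. H \<subseteq> SL2 \<and> S \<subseteq> H \<and> closed H \<and> mat 1 \<in> H \<and>
          (\<forall>A\<in>H. \<forall>B\<in>H. A ** B \<in> H) \<and> (\<forall>A\<in>H. matrix_inv A \<in> H)}"

definition transfer :: "real \<Rightarrow> real \<Rightarrow> real^2^2" where
  "transfer E w = (\<chi> i j.
     if i = 1 \<and> j = 1 then (w - E) * (w + E) + 1
     else if i = 1 \<and> j = 2 then w - E
     else if i = 2 \<and> j = 1 then w + E
     else 1)"

definition proj_point :: "real^2 \<Rightarrow> (real^2) set" where
  "proj_point x = span {x}"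

end

theory Submission imports Defs begin

lemma mm2: "((A::real^2^2) ** B) $ i $ j = A$i$1 * B$1$j + A$i$2 * B$2$j"
  by (simp add: matrix_matrix_mult_def sum_2)
lemma mv2: "((A::real^2^2) *v x) $ i = A$i$1 * x$1 + A$i$2 * x$2"
  by (simp add: matrix_vector_mult_def sum_2)

lemma transfer_cont: "continuous_on UNIV (transfer E)"
  unfolding transfer_def
  apply (intro continuous_on_vec_lambda)
  subgoal for i j by (cases "i = 1 \<and> j = 1"; cases "i = 1 \<and> j = 2"; cases "i = 2 \<and> j = 1"; auto intro!: continuous_intros)
  done

lemma tr_entries: "transfer E w $ 1 $ 1 = (w - E) * (w + E) + 1" "transfer E w $ 1 $ 2 = w - E"
   "transfer E w $ 2 $ 1 = w + E" "transfer E w $ 2 $ 2 = 1"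
  by (simp_all add: transfer_def)

lemma inv_eq: assumes "(A::real^2^2) ** B = mat 1" "B ** A = mat 1" shows "matrix_inv A = B"
proof -
  have "A ** matrix_inv A = mat 1 \<and> matrix_inv A ** A = mat 1"
    unfolding matrix_inv_def by (rule someI[of _ B]) (use assms in auto)
  then have "matrix_inv A = matrix_inv A ** (A ** B)" using assms by (simp add: matrix_mul_rid)
  also have "\<dots> = B" using \<open>_ \<and> _\<close> by (simp add: matrix_mul_assoc matrix_mul_lid)
  finally show ?thesis .
qed

definition inv2 :: "real^2^2 \<Rightarrow> real^2^2" where
  "inv2 A = (\<chi> i j. if i = 1 \<and> j = 1 then A$2$2 else if i = 1 \<and> j = 2 then - A$1$2
      else if i = 2 \<and> j = 1 then - A$2$1 else A$1$1)"

lemma inv2_entries: "inv2 A $ 1 $ 1 = A$2$2" "inv2 A $ 1 $ 2 = - A$1$2" "inv2 A $ 2 $ 1 = - A$2$1" "inv2 A $ 2 $ 2 = A$1$1"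
  by (simp_all add: inv2_def)

lemma mat1_entries: "(mat 1 :: real^2^2) $ 1 $ 1 = 1" "(mat 1 :: real^2^2) $ 1 $ 2 = 0"
   "(mat 1 :: real^2^2) $ 2 $ 1 = 0" "(mat 1 :: real^2^2) $ 2 $ 2 = 1"
  by (simp_all add: mat_def)

lemma eq2: "(A::real^2^2) = B \<longleftrightarrow> A$1$1 = B$1$1 \<and> A$1$2 = B$1$2 \<and> A$2$1 = B$2$1 \<and> A$2$2 = B$2$2"
  by (auto simp: vec_eq_iff forall_2)

lemma det_transfer: "transfer E w $1$1 * transfer E w $2$2 - transfer E w $1$2 * transfer E w $2$1 = 1"
  by (simp add: tr_entries algebra_simps)

lemma inv_transfer: "matrix_inv (transfer E w) = inv2 (transfer E w)"
  apply (rule inv_eq)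
  using det_transfer[of E w] by (simp_all add: eq2 mm2 inv2_entries mat1_entries algebra_simps)


lemma supp:
  assumes "sets \<mu> = sets borel" "measure_support \<mu> = {0..1}" "w \<in> {0..1}"
  shows "transfer E w \<in> measure_support (distr \<mu> (borel :: (real^2^2) measure) (transfer E))"
proof -
  have sp: "space \<mu> = UNIV" using sets_eq_imp_space_eq[OF assms(1)] by simp
  have meas: "transfer E \<in> measurable \<mu> borel"
    using measurable_cong_sets[OF assms(1) refl] borel_measurable_continuous_onI[OF transfer_cont] by blast
  show ?thesis unfolding measure_support_def
  proof (intro CollectI allI impI)
    fix U :: "(real^2^2) set" assume U: "open U" "transfer E w \<in> U"
    have "emeasure (distr \<mu> borel (transfer E)) U = emeasure \<mu> (transfer E -` U \<inter> space \<mu>)"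
      by (rule emeasure_distr[OF meas]) (use U in auto)
    moreover have "open (transfer E -` U)" using open_vimage[OF U(1) transfer_cont] .
    moreover have "w \<in> measure_support \<mu>" using assms by simp
    ultimately show "emeasure (distr \<mu> borel (transfer E)) U > 0"
      using U sp unfolding measure_support_def by auto
  qed
qed

definition cr :: "real^2 \<Rightarrow> real^2 \<Rightarrow> real" where "cr a b = a$1*b$2 - a$2*b$1"

lemma proj_ne: assumes "cr a b \<noteq> 0" shows "proj_point a \<noteq> proj_point b"
proof
  assume "proj_point a = proj_point b"
  then have "a \<in> span {b}" unfolding proj_point_def by (metis span_base singletonI)
  then obtain c where "a = c *\<^sub>R b" by (auto simp: span_singleton)
  then show False using assms by (simp add: cr_def)
qed

lemma three:
  fixes k :: "real^2^2"
  assumes det: "k$1$1 * k$2$2 - k$1$2 * k$2$1 = 1" and tr: "k$1$1 + k$2$2 \<noteq> 0"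
    and c: "cr x (k *v x) \<noteq> 0"
  shows "cr (mat 1 *v x) (k *v x) \<noteq> 0 \<and> cr (mat 1 *v x) ((k ** k) *v x) \<noteq> 0 \<and> cr (k *v x) ((k ** k) *v x) \<noteq> 0"
proof -
  have e1: "cr x ((k ** k) *v x) = (k$1$1 + k$2$2) * cr x (k *v x)"
    by (simp add: cr_def mv2 mm2 algebra_simps)
  have e2: "cr (k *v x) ((k ** k) *v x) = (k$1$1 * k$2$2 - k$1$2 * k$2$1) * cr x (k *v x)"
    by (simp add: cr_def mv2 mm2 algebra_simps)
  show ?thesis using e1 e2 det tr c by (simp add: matrix_vector_mul_lid)
qed

lemma trace_rec:
  fixes k p :: "real^2^2"
  assumes det: "k$1$1 * k$2$2 - k$1$2 * k$2$1 = 1"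
  shows "(k ** (k ** p))$1$1 + (k ** (k ** p))$2$2 = (k$1$1 + k$2$2) * ((k ** p)$1$1 + (k ** p)$2$2) - (p$1$1 + p$2$2)"
proof -
  have "(k ** (k ** p))$1$1 + (k ** (k ** p))$2$2 - ((k$1$1 + k$2$2) * ((k ** p)$1$1 + (k ** p)$2$2) - (p$1$1 + p$2$2))
     = (p$1$1 + p$2$2) * (1 - (k$1$1 * k$2$2 - k$1$2 * k$2$1))"
    by (simp add: mm2 algebra_simps)
  then show ?thesis using det by simp
qed

primrec pw :: "real^2^2 \<Rightarrow> nat \<Rightarrow> real^2^2" where
  "pw k 0 = mat 1" | "pw k (Suc n) = k ** pw k n"

lemma trace_grow:
  fixes k :: "real^2^2"
  assumes det: "k$1$1 * k$2$2 - k$1$2 * k$2$1 = 1" and tr: "k$1$1 + k$2$2 = 9/4"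
  shows "(pw k n)$1$1 + (pw k n)$2$2 \<ge> 2 + real n / 4"
proof -
  define t where "t n = (pw k n)$1$1 + (pw k n)$2$2" for n
  have rec: "t (Suc (Suc n)) = 9/4 * t (Suc n) - t n" for n
    using trace_rec[OF det, of "pw k n"] tr unfolding t_def by simp
  have t0: "t 0 = 2" by (simp add: t_def mat1_entries)
  have t1: "t 1 = 9/4" using tr by (simp add: t_def matrix_mul_rid)
  have "t n \<ge> 2 + real n / 4 \<and> t (Suc n) - t n \<ge> 1/4" for n
  proof (induction n)
    case 0 then show ?case using t0 t1 by simp
  next
    case (Suc n)
    then show ?case using rec[of n] by (simp add: field_simps)
  qed
  then show ?thesis unfolding t_def by blast
qed


lemma g1e: "(inv2 (transfer E 0) ** transfer E (1/2)) $1$1 = 5/4 + E/2"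
  "(inv2 (transfer E 0) ** transfer E (1/2)) $1$2 = 1/2"
  "(inv2 (transfer E 0) ** transfer E (1/2)) $2$1 = 1/2 - E/4 - E^2/2"
  "(inv2 (transfer E 0) ** transfer E (1/2)) $2$2 = 1 - E/2"
  apply (simp_all add: mm2 inv2_entries tr_entries)
  by (simp_all add: field_simps power2_eq_square)

lemma g2e: "(inv2 (transfer E (1/2)) ** transfer E 1) $1$1 = 3/2 + E/2"
  "(inv2 (transfer E (1/2)) ** transfer E 1) $1$2 = 1/2"
  "(inv2 (transfer E (1/2)) ** transfer E 1) $2$1 = 1/4 - 3*E/4 - E^2/2"
  "(inv2 (transfer E (1/2)) ** transfer E 1) $2$2 = 3/4 - E/2"
  apply (simp_all add: mm2 inv2_entries tr_entries)
  by (simp_all add: field_simps power2_eq_square)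

lemma quad:
  fixes E x1 x2 :: real
  assumes "(1/2 - E/4 - E^2/2) * x1^2 - (1/4 + E) * x1 * x2 - 1/2 * x2^2 = 0"
    and "(1/4 - 3*E/4 - E^2/2) * x1^2 - (3/4 + E) * x1 * x2 - 1/2 * x2^2 = 0"
  shows "x1 = 0 \<and> x2 = 0"
proof -
  have id: "x1 * ((1 + 2*E) * x1 + 2 * x2) = 4 * (((1/2 - E/4 - E^2/2) * x1^2 - (1/4 + E) * x1 * x2 - 1/2 * x2^2)
      - ((1/4 - 3*E/4 - E^2/2) * x1^2 - (3/4 + E) * x1 * x2 - 1/2 * x2^2))"
    by (simp add: algebra_simps power2_eq_square)
  have "x1 * ((1 + 2*E) * x1 + 2 * x2) = 0" unfolding id using assms by simp
  then have "x1 = 0 \<or> (1 + 2*E) * x1 + 2 * x2 = 0" by simp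
  then consider "x1 = 0" | "x2 = - (1 + 2*E) * x1 / 2" by (auto simp: field_simps)
  then show ?thesis
  proof cases
    case 1 then show ?thesis using assms(1) by simp
  next
    case 2
    have "4 * ((1/2 - E/4 - E^2/2) * x1^2 - (1/4 + E) * x1 * x2 - 1/2 * x2^2) = 2 * x1^2"
      unfolding 2 by (simp add: field_simps power2_eq_square; simp add: algebra_simps)
    then have "2 * x1^2 = 0" using assms(1) by (metis mult_zero_right)
    then have "x1 = 0" by simp
    then show ?thesis using 2 by simp
  qed
qed



lemma crQ: "cr x (A *v x) = A$2$1*(x$1)^2 + (A$2$2 - A$1$1)*x$1*x$2 - A$1$2*(x$2)^2"
  by (simp add: cr_def mv2 algebra_simps power2_eq_square)

theorem mainTheorem15:
  fixes \<mu> :: "real measure" and E :: real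
  assumes "prob_space \<mu>"
    and "sets \<mu> = sets borel"
    and "measure_support \<mu> = {0..1}"
    and "E \<in> {-3..3}"
  defines "G \<equiv> closed_subgroup_generated
                 (measure_support (distr \<mu> (borel :: (real^2^2) measure) (transfer E)))"
  shows "\<not> compact G \<and>
         (\<forall>x::real^2. x \<noteq> 0 \<longrightarrow>
            (\<exists>g1\<in>G. \<exists>g2\<in>G. \<exists>g3\<in>G.
               proj_point (g1 *v x) \<noteq> proj_point (g2 *v x) \<and>
               proj_point (g1 *v x) \<noteq> proj_point (g3 *v x) \<and>
               proj_point (g2 *v x) \<noteq> proj_point (g3 *v x)))"
proof -
  have TG: "transfer E w \<in> G" if "w \<in> {0..1}" for w
    using supp[OF assms(2,3) that, of E] unfolding G_def closed_subgroup_generated_def by blast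
  have mulG: "A ** B \<in> G" if "A \<in> G" "B \<in> G" for A B
    using that unfolding G_def closed_subgroup_generated_def by blast
  have invG: "matrix_inv A \<in> G" if "A \<in> G" for A
    using that unfolding G_def closed_subgroup_generated_def by blast
  have oneG: "mat 1 \<in> G"
    unfolding G_def closed_subgroup_generated_def by blast
  define g1 where "g1 = inv2 (transfer E 0) ** transfer E (1/2)"
  define g2 where "g2 = inv2 (transfer E (1/2)) ** transfer E 1"
  have T0: "transfer E 0 \<in> G" "transfer E (1/2) \<in> G" "transfer E 1 \<in> G" by (auto intro: TG)
  have g1G: "g1 \<in> G" unfolding g1_def using mulG[OF invG[OF T0(1)] T0(2)] by (simp add: inv_transfer)
  have g2G: "g2 \<in> G" unfolding g2_def using mulG[OF invG[OF T0(2)] T0(3)] by (simp add: inv_transfer)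
  note g1e' = g1e[of E, folded g1_def] and g2e' = g2e[of E, folded g2_def]
  have det1: "g1$1$1 * g1$2$2 - g1$1$2 * g1$2$1 = 1" unfolding g1e' by (simp add: field_simps power2_eq_square)
  have det2: "g2$1$1 * g2$2$2 - g2$1$2 * g2$2$1 = 1" unfolding g2e' by (simp add: field_simps power2_eq_square)
  have tr1: "g1$1$1 + g1$2$2 = 9/4" unfolding g1e' by simp
  have tr2: "g2$1$1 + g2$2$2 = 9/4" unfolding g2e' by simp
  have nc: "\<not> compact G"
  proof
    assume "compact G"
    then have "bounded G" by (rule compact_imp_bounded)
    then obtain B where B: "\<And>g. g \<in> G \<Longrightarrow> norm g \<le> B" unfolding bounded_iff by blast
    have pwG: "pw g1 n \<in> G" for n by (induction n) (auto intro: mulG g1G oneG)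
    have bnd: "\<bar>g$i$j\<bar> \<le> norm g" for g :: "real^2^2" and i j
      using Finite_Cartesian_Product.norm_nth_le[of g i] component_le_norm_cart[of "g$i" j] by linarith
    have "2 + real n / 4 \<le> 2 * B" for n
    proof -
      have "2 + real n / 4 \<le> (pw g1 n)$1$1 + (pw g1 n)$2$2" by (rule trace_grow[OF det1 tr1])
      also have "\<dots> \<le> 2 * B" using bnd[of "pw g1 n" 1 1] bnd[of "pw g1 n" 2 2] B[OF pwG[of n]] by linarith
      finally show ?thesis .
    qed
    from this[of "nat \<lceil>8 * B\<rceil>"] have "2 + real (nat \<lceil>8 * B\<rceil>) / 4 \<le> 2 * B" .
    moreover have "real (nat \<lceil>8 * B\<rceil>) \<ge> 8 * B" by linarith
    ultimately show False by linarith
  qed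
  have orb: "\<exists>a\<in>G. \<exists>b\<in>G. \<exists>c\<in>G. proj_point (a *v x) \<noteq> proj_point (b *v x) \<and>
               proj_point (a *v x) \<noteq> proj_point (c *v x) \<and> proj_point (b *v x) \<noteq> proj_point (c *v x)"
    if x: "x \<noteq> 0" for x :: "real^2"
  proof -
    have "cr x (g1 *v x) \<noteq> 0 \<or> cr x (g2 *v x) \<noteq> 0"
    proof (rule ccontr)
      assume "\<not> ?thesis"
      then have "cr x (g1 *v x) = 0" "cr x (g2 *v x) = 0" by auto
      moreover have "cr x (g1 *v x) = (1/2 - E/4 - E^2/2) * (x$1)^2 - (1/4 + E) * x$1 * x$2 - 1/2 * (x$2)^2"
        unfolding crQ g1e' by (simp add: algebra_simps)
      moreover have "cr x (g2 *v x) = (1/4 - 3*E/4 - E^2/2) * (x$1)^2 - (3/4 + E) * x$1 * x$2 - 1/2 * (x$2)^2"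
        unfolding crQ g2e' by (simp add: algebra_simps)
      ultimately have "(1/2 - E/4 - E^2/2) * (x$1)^2 - (1/4 + E) * x$1 * x$2 - 1/2 * (x$2)^2 = 0"
          "(1/4 - 3*E/4 - E^2/2) * (x$1)^2 - (3/4 + E) * x$1 * x$2 - 1/2 * (x$2)^2 = 0"
        by simp_all
      from quad[OF this] have "x = 0" by (simp add: vec_eq_iff forall_2)
      with x show False by simp
    qed
    then obtain k where k: "k \<in> G" "k$1$1 * k$2$2 - k$1$2 * k$2$1 = 1" "k$1$1 + k$2$2 \<noteq> 0" "cr x (k *v x) \<noteq> 0"
    proof
      assume "cr x (g1 *v x) \<noteq> 0" then show thesis using that[of g1] g1G det1 tr1 by simp
    next
      assume "cr x (g2 *v x) \<noteq> 0" then show thesis using that[of g2] g2G det2 tr2 by simp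
    qed
    from three[OF k(2-4)] have "cr (mat 1 *v x) (k *v x) \<noteq> 0" "cr (mat 1 *v x) ((k ** k) *v x) \<noteq> 0"
      "cr (k *v x) ((k ** k) *v x) \<noteq> 0" by auto
    then have "proj_point (mat 1 *v x) \<noteq> proj_point (k *v x) \<and> proj_point (mat 1 *v x) \<noteq> proj_point ((k ** k) *v x)
       \<and> proj_point (k *v x) \<noteq> proj_point ((k ** k) *v x)" using proj_ne by simp
    then show ?thesis using oneG k(1) mulG[OF k(1) k(1)] by blast
  qed
  show ?thesis using nc orb by blast
qed

end
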